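(* For $O\in\mathbb{R}^2$ let $v$ be a uniform random point in $[0,1]^2$, $g_1(O):=\mathbb{E}(d(O,v))$, and let $g_3(O)$ be the Lebesgue measure of $\{x\in[0,1]^2:d(O,x)>\tfrac34 g_1(O)\}$. Then for all $O,O'\in\mathbb{R}^2$, $|g_3(O)-g_3(O')|\le(3+\sqrt2)\,d(O,O')$.
   Context: $d$ is Euclidean distance. *)

theory Defs
  imports "HOL-Analysis.Analysis"
begin

text \<open>Points of the plane are pairs of reals; dist on real \<times> real is Euclidean distance.
  The unit square is cbox (0,0) (1,1); the uniform distribution on it is Lebesgue measure
  restricted to it (total mass 1).\<close>

definition unit_sq :: "(real \<times> real) set" where
  "unit_sq = cbox (0,0) (1,1)"

definition g1 :: "real \<times> real \<Rightarrow> real" where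
  "g1 P = (\<integral>v. dist P v \<partial>(uniform_measure lborel unit_sq))"

definition g3 :: "real \<times> real \<Rightarrow> real" where
  "g3 P = measure lborel {x \<in> unit_sq. dist P x > 3/4 * g1 P}"

end

theory Submission
  imports Defs
begin

lemma F_int_pos:
  fixes a c d :: real assumes "0 \<le> c" "c \<le> d"
  shows "((\<lambda>b. \<bar>b\<bar> / sqrt (a\<^sup>2 + b\<^sup>2)) has_integral (sqrt (a\<^sup>2 + d\<^sup>2) - sqrt (a\<^sup>2 + c\<^sup>2))) {c..d}"
proof (rule fundamental_theorem_of_calculus_interior[OF assms(2)])
  show "continuous_on {c..d} (\<lambda>b. sqrt (a\<^sup>2 + b\<^sup>2))" by (intro continuous_intros)
  fix x assume x: "x \<in> {c<..<d}"
  then have xp: "x > 0" using assms by auto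
  then have pos: "a\<^sup>2 + x\<^sup>2 > 0" by (simp add: add_nonneg_pos)
  have "((\<lambda>b. sqrt (a\<^sup>2 + b\<^sup>2)) has_real_derivative (inverse (sqrt (a\<^sup>2 + x\<^sup>2)) / 2 * (0 + 2 * x))) (at x)"
    by (rule DERIV_real_sqrt[THEN DERIV_chain2]) (use pos in \<open>auto intro!: derivative_eq_intros\<close>)
  moreover have "inverse (sqrt (a\<^sup>2 + x\<^sup>2)) / 2 * (0 + 2 * x) = \<bar>x\<bar> / sqrt (a\<^sup>2 + x\<^sup>2)"
    using xp by (simp add: field_simps)
  ultimately show "((\<lambda>b. sqrt (a\<^sup>2 + b\<^sup>2)) has_vector_derivative \<bar>x\<bar> / sqrt (a\<^sup>2 + x\<^sup>2)) (at x)"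
    by (simp add: has_real_derivative_iff_has_vector_derivative)
qed

lemma F_int_neg:
  fixes a c d :: real assumes "0 \<le> c" "c \<le> d"
  shows "((\<lambda>b. \<bar>b\<bar> / sqrt (a\<^sup>2 + b\<^sup>2)) has_integral (sqrt (a\<^sup>2 + d\<^sup>2) - sqrt (a\<^sup>2 + c\<^sup>2))) {-d..-c}"
proof -
  have "-d \<le> -c" using assms by simp
  have "((\<lambda>b. \<bar>b\<bar> / sqrt (a\<^sup>2 + b\<^sup>2)) has_integral ((- sqrt (a\<^sup>2 + (-c)\<^sup>2)) - (- sqrt (a\<^sup>2 + (-d)\<^sup>2)))) {-d..-c}"
  proof (rule fundamental_theorem_of_calculus_interior[OF \<open>-d \<le> -c\<close>])
    show "continuous_on {-d..-c} (\<lambda>b. - sqrt (a\<^sup>2 + b\<^sup>2))" by (intro continuous_intros)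
    fix x assume x: "x \<in> {-d<..<-c}"
    then have xp: "x < 0" using assms by auto
    then have pos: "a\<^sup>2 + x\<^sup>2 > 0" by (simp add: add_nonneg_pos)
    have "((\<lambda>b. sqrt (a\<^sup>2 + b\<^sup>2)) has_real_derivative (inverse (sqrt (a\<^sup>2 + x\<^sup>2)) / 2 * (0 + 2 * x))) (at x)"
      by (rule DERIV_real_sqrt[THEN DERIV_chain2]) (use pos in \<open>auto intro!: derivative_eq_intros\<close>)
    then have "((\<lambda>b. - sqrt (a\<^sup>2 + b\<^sup>2)) has_real_derivative - (inverse (sqrt (a\<^sup>2 + x\<^sup>2)) / 2 * (0 + 2 * x))) (at x)"
      by (rule DERIV_minus)
    moreover have "- (inverse (sqrt (a\<^sup>2 + x\<^sup>2)) / 2 * (0 + 2 * x)) = \<bar>x\<bar> / sqrt (a\<^sup>2 + x\<^sup>2)"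
      using xp by (simp add: field_simps)
    ultimately show "((\<lambda>b. - sqrt (a\<^sup>2 + b\<^sup>2)) has_vector_derivative \<bar>x\<bar> / sqrt (a\<^sup>2 + x\<^sup>2)) (at x)"
      by (simp add: has_real_derivative_iff_has_vector_derivative)
  qed
  then show ?thesis by simp
qed

lemma sqrt_max_aux:
  fixes a r :: real assumes r: "0 \<le> r"
  shows "sqrt (a\<^sup>2 + max 0 (r\<^sup>2 - a\<^sup>2)) = max \<bar>a\<bar> r"
proof -
  have "a\<^sup>2 + max 0 (r\<^sup>2 - a\<^sup>2) = (max \<bar>a\<bar> r)\<^sup>2"
  proof (cases "\<bar>a\<bar> \<le> r")
    case True
    then have "\<bar>a\<bar>\<^sup>2 \<le> r\<^sup>2" by (intro power_mono) auto
    then have "a\<^sup>2 \<le> r\<^sup>2" by simp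
    then show ?thesis using True by (simp add: max_def)
  next
    case False
    then have "r\<^sup>2 \<le> \<bar>a\<bar>\<^sup>2" using r by (intro power_mono) auto
    then have "r\<^sup>2 \<le> a\<^sup>2" by simp
    then show ?thesis using False by (simp add: max_def)
  qed
  moreover have "0 \<le> max \<bar>a\<bar> r" by simp
  ultimately show ?thesis by simp
qed

lemma inner_bound:
  fixes a s r :: real assumes s: "0 \<le> s" "s \<le> r"
  shows "(\<integral>\<^sup>+b. ennreal (\<bar>b\<bar> / sqrt (a\<^sup>2 + b\<^sup>2)) * indicator {b. s < sqrt (a\<^sup>2 + b\<^sup>2) \<and> sqrt (a\<^sup>2 + b\<^sup>2) \<le> r} b \<partial>lborel)
         \<le> ennreal (2 * (r - s))"
proof -
  define c where "c = sqrt (max 0 (s\<^sup>2 - a\<^sup>2))"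
  define d where "d = sqrt (max 0 (r\<^sup>2 - a\<^sup>2))"
  have c0: "0 \<le> c" unfolding c_def by simp
  have cd: "c \<le> d" unfolding c_def d_def using s
    by (intro real_sqrt_le_mono max.mono) (auto intro: power_mono)
  define f where "f b = \<bar>b\<bar> / sqrt (a\<^sup>2 + b\<^sup>2)" for b
  have fnn: "0 \<le> f b" for b unfolding f_def by simp
  have ptw: "ennreal (f b) * indicator {b. s < sqrt (a\<^sup>2 + b\<^sup>2) \<and> sqrt (a\<^sup>2 + b\<^sup>2) \<le> r} b
      \<le> ennreal (indicator {c..d} b * f b) + ennreal (indicator {-d..-c} b * f b)" for b
  proof (cases "s < sqrt (a\<^sup>2 + b\<^sup>2) \<and> sqrt (a\<^sup>2 + b\<^sup>2) \<le> r")
    case True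
    have "s\<^sup>2 < (sqrt (a\<^sup>2 + b\<^sup>2))\<^sup>2" using True s by (intro power_strict_mono) auto
    then have h1: "s\<^sup>2 < a\<^sup>2 + b\<^sup>2" by simp
    have h2: "a\<^sup>2 + b\<^sup>2 \<le> r\<^sup>2" using True by (auto simp: sqrt_le_D)
    have "c \<le> \<bar>b\<bar>"
      unfolding c_def using h1 by (auto simp: real_le_lsqrt max_def)
    moreover have "\<bar>b\<bar> \<le> d"
    proof -
      have "b\<^sup>2 \<le> max 0 (r\<^sup>2 - a\<^sup>2)" using h2 by linarith
      then have "sqrt (b\<^sup>2) \<le> d" unfolding d_def by (rule real_sqrt_le_mono)
      then show ?thesis by simp
    qed
    ultimately have "b \<in> {c..d} \<or> b \<in> {-d..-c}" by (cases "b \<ge> 0") auto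
    then show ?thesis using True fnn[of b] by (auto simp: indicator_def)
  next
    case False then show ?thesis by simp
  qed
  have "(\<integral>\<^sup>+b. ennreal (f b) * indicator {b. s < sqrt (a\<^sup>2 + b\<^sup>2) \<and> sqrt (a\<^sup>2 + b\<^sup>2) \<le> r} b \<partial>lborel)
      \<le> (\<integral>\<^sup>+b. ennreal (indicator {c..d} b * f b) + ennreal (indicator {-d..-c} b * f b) \<partial>lborel)"
    by (intro nn_integral_mono ptw)
  also have "\<dots> = (\<integral>\<^sup>+b. ennreal (indicator {c..d} b * f b) \<partial>lborel) + (\<integral>\<^sup>+b. ennreal (indicator {-d..-c} b * f b) \<partial>lborel)"
    by (rule nn_integral_add) (auto simp: f_def)
  also have "\<dots> = ennreal (sqrt (a\<^sup>2 + d\<^sup>2) - sqrt (a\<^sup>2 + c\<^sup>2)) + ennreal (sqrt (a\<^sup>2 + d\<^sup>2) - sqrt (a\<^sup>2 + c\<^sup>2))"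
    using nn_integral_has_integral_lebesgue[OF _ F_int_pos[OF c0 cd, of a]]
      nn_integral_has_integral_lebesgue[OF _ F_int_neg[OF c0 cd, of a]]
    unfolding f_def by simp
  also have "sqrt (a\<^sup>2 + d\<^sup>2) - sqrt (a\<^sup>2 + c\<^sup>2) \<le> r - s"
  proof -
    have "sqrt (a\<^sup>2 + d\<^sup>2) = max \<bar>a\<bar> r" unfolding d_def using s
      by (simp add: sqrt_max_aux)
    moreover have "sqrt (a\<^sup>2 + c\<^sup>2) = max \<bar>a\<bar> s" unfolding c_def using s
      by (simp add: sqrt_max_aux)
    ultimately show ?thesis using s by linarith
  qed
  then have "ennreal (sqrt (a\<^sup>2 + d\<^sup>2) - sqrt (a\<^sup>2 + c\<^sup>2)) + ennreal (sqrt (a\<^sup>2 + d\<^sup>2) - sqrt (a\<^sup>2 + c\<^sup>2)) \<le> ennreal (r - s) + ennreal (r - s)"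
    by (intro add_mono ennreal_leI)
  also have "\<dots> = ennreal (2 * (r - s))" using s by (simp flip: ennreal_plus)
  finally show ?thesis unfolding f_def .
qed

lemma inner_shift:
  fixes a s r q :: real assumes s: "0 \<le> s" "s \<le> r"
  shows "(\<integral>\<^sup>+y. ennreal (\<bar>q - y\<bar> / sqrt (a\<^sup>2 + (q - y)\<^sup>2)) * indicator {y. s < sqrt (a\<^sup>2 + (q - y)\<^sup>2) \<and> sqrt (a\<^sup>2 + (q - y)\<^sup>2) \<le> r} y \<partial>lborel)
         \<le> ennreal (2 * (r - s))"
proof -
  define h where "h y = ennreal (\<bar>q - y\<bar> / sqrt (a\<^sup>2 + (q - y)\<^sup>2)) * indicator {y. s < sqrt (a\<^sup>2 + (q - y)\<^sup>2) \<and> sqrt (a\<^sup>2 + (q - y)\<^sup>2) \<le> r} y" for y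
  have hm: "h \<in> borel_measurable borel" unfolding h_def by measurable
  have "(\<integral>\<^sup>+y. h y \<partial>lborel) = ennreal \<bar>-1\<bar> * (\<integral>\<^sup>+x. h (q + (-1) * x) \<partial>lborel)"
    by (rule nn_integral_real_affine[OF hm]) simp
  then have "(\<integral>\<^sup>+y. ennreal (\<bar>q - y\<bar> / sqrt (a\<^sup>2 + (q - y)\<^sup>2)) * indicator {y. s < sqrt (a\<^sup>2 + (q - y)\<^sup>2) \<and> sqrt (a\<^sup>2 + (q - y)\<^sup>2) \<le> r} y \<partial>lborel)
     = (\<integral>\<^sup>+x. ennreal (\<bar>q - (q + (-1) * x)\<bar> / sqrt (a\<^sup>2 + (q - (q + (-1) * x))\<^sup>2)) * indicator {y. s < sqrt (a\<^sup>2 + (q - y)\<^sup>2) \<and> sqrt (a\<^sup>2 + (q - y)\<^sup>2) \<le> r} (q + (-1) * x) \<partial>lborel)"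
    unfolding h_def by simp
  also have "\<dots> = (\<integral>\<^sup>+b. ennreal (\<bar>b\<bar> / sqrt (a\<^sup>2 + b\<^sup>2)) * indicator {b. s < sqrt (a\<^sup>2 + b\<^sup>2) \<and> sqrt (a\<^sup>2 + b\<^sup>2) \<le> r} b \<partial>lborel)"
    by (simp add: indicator_def)
  also have "\<dots> \<le> ennreal (2 * (r - s))" by (rule inner_bound[OF s])
  finally show ?thesis .
qed

lemma S_sets[measurable]: "unit_sq \<in> sets lborel" unfolding unit_sq_def by simp
lemma S_em: "emeasure lborel unit_sq = 1"
  unfolding unit_sq_def by (simp add: emeasure_lborel_cbox_eq Basis_prod_def)
lemma S_mem: "(x1, x2) \<in> unit_sq \<longleftrightarrow> x1 \<in> {0..1} \<and> x2 \<in> {0..1}"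
  unfolding unit_sq_def by (auto simp: cbox_Pair_iff)

lemma dist_meas[measurable]: "dist (Q::real\<times>real) \<in> borel_measurable borel"
  by (intro borel_measurable_continuous_onI continuous_intros)

lemma fst_meas[measurable]: "(fst :: real\<times>real \<Rightarrow> real) \<in> borel_measurable borel"
  by (intro borel_measurable_continuous_onI continuous_intros)
lemma snd_meas[measurable]: "(snd :: real\<times>real \<Rightarrow> real) \<in> borel_measurable borel"
  by (intro borel_measurable_continuous_onI continuous_intros)

lemma dist_pair_sq: "dist (q1, q2) (x1::real, x2::real) = sqrt ((q1 - x1)\<^sup>2 + (q2 - x2)\<^sup>2)"
  by (simp add: dist_Pair_Pair dist_real_def)

lemma annulus_bound:
  fixes Q :: "real \<times> real" assumes s: "0 \<le> s" "s \<le> r"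
  shows "emeasure lborel (unit_sq \<inter> {x. s < dist Q x \<and> dist Q x \<le> r}) \<le> ennreal (4 * (r - s))"
proof -
  obtain q1 q2 where Q: "Q = (q1, q2)" by (cases Q)
  define A where "A = unit_sq \<inter> {x. s < dist Q x \<and> dist Q x \<le> r}"
  have A_sets[measurable]: "A \<in> sets borel" unfolding A_def by measurable
  have A_sets'[measurable]: "A \<in> sets lborel" by simp
  define G1 where "G1 x = ennreal (\<bar>q1 - fst x\<bar> / dist Q x) * indicator A x" for x
  define G2 where "G2 x = ennreal (\<bar>q2 - snd x\<bar> / dist Q x) * indicator A x" for x
  have G1b: "G1 \<in> borel_measurable borel" unfolding G1_def by measurable
  then have G1m[measurable]: "G1 \<in> borel_measurable lborel" by simp
  have G2b: "G2 \<in> borel_measurable borel" unfolding G2_def by measurable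
  then have G2m[measurable]: "G2 \<in> borel_measurable lborel" by simp
  have ptw: "indicator A x \<le> G1 x + G2 x" for x
  proof (cases "x \<in> A")
    case True
    obtain x1 x2 where x: "x = (x1, x2)" by (cases x)
    have dpos: "dist Q x > 0" using True s unfolding A_def by auto
    have "dist Q x \<le> \<bar>q1 - x1\<bar> + \<bar>q2 - x2\<bar>"
      unfolding Q x dist_pair_sq by (rule real_le_lsqrt) (auto simp: power2_eq_square abs_mult_self_eq algebra_simps)
    then have "1 \<le> \<bar>q1 - x1\<bar> / dist Q x + \<bar>q2 - x2\<bar> / dist Q x"
      using dpos by (simp add: field_simps add_divide_distrib[symmetric])
    then have "ennreal 1 \<le> ennreal (\<bar>q1 - x1\<bar> / dist Q x) + ennreal (\<bar>q2 - x2\<bar> / dist Q x)"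
      by (simp flip: ennreal_plus)
    then show ?thesis using True unfolding G1_def G2_def x by simp
  next
    case False then show ?thesis by simp
  qed
  have "emeasure lborel A = (\<integral>\<^sup>+x. indicator A x \<partial>lborel)" by simp
  also have "\<dots> \<le> (\<integral>\<^sup>+x. G1 x + G2 x \<partial>lborel)" by (intro nn_integral_mono ptw)
  also have "\<dots> = (\<integral>\<^sup>+x. G1 x \<partial>lborel) + (\<integral>\<^sup>+x. G2 x \<partial>lborel)"
    by (rule nn_integral_add) auto
  also have "(\<integral>\<^sup>+x. G2 x \<partial>lborel) \<le> ennreal (2 * (r - s))"
  proof -
    have "(\<integral>\<^sup>+x. G2 x \<partial>lborel) = (\<integral>\<^sup>+x. G2 x \<partial>(lborel \<Otimes>\<^sub>M lborel))"
      by (simp add: lborel_prod)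
    also have "\<dots> = (\<integral>\<^sup>+x1. (\<integral>\<^sup>+x2. G2 (x1, x2) \<partial>lborel) \<partial>lborel)"
      by (rule lborel.nn_integral_fst[symmetric]) (simp add: lborel_prod)
    also have "\<dots> \<le> (\<integral>\<^sup>+x1. indicator {0..1::real} x1 * ennreal (2 * (r - s)) \<partial>lborel)"
    proof (rule nn_integral_mono)
      fix x1 :: real
      have "(\<integral>\<^sup>+x2. G2 (x1, x2) \<partial>lborel) \<le> (\<integral>\<^sup>+x2. indicator {0..1} x1 * (ennreal (\<bar>q2 - x2\<bar> / sqrt ((q1 - x1)\<^sup>2 + (q2 - x2)\<^sup>2)) * indicator {y. s < sqrt ((q1 - x1)\<^sup>2 + (q2 - y)\<^sup>2) \<and> sqrt ((q1 - x1)\<^sup>2 + (q2 - y)\<^sup>2) \<le> r} x2) \<partial>lborel)"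
        by (intro nn_integral_mono) (auto simp: G2_def A_def Q dist_pair_sq S_mem indicator_def)
      also have "\<dots> = indicator {0..1} x1 * (\<integral>\<^sup>+x2. ennreal (\<bar>q2 - x2\<bar> / sqrt ((q1 - x1)\<^sup>2 + (q2 - x2)\<^sup>2)) * indicator {y. s < sqrt ((q1 - x1)\<^sup>2 + (q2 - y)\<^sup>2) \<and> sqrt ((q1 - x1)\<^sup>2 + (q2 - y)\<^sup>2) \<le> r} x2 \<partial>lborel)"
        by (rule nn_integral_cmult) measurable
      also have "\<dots> \<le> indicator {0..1} x1 * ennreal (2 * (r - s))"
        by (intro mult_left_mono inner_shift[OF s]) auto
      finally show "(\<integral>\<^sup>+x2. G2 (x1, x2) \<partial>lborel) \<le> indicator {0..1} x1 * ennreal (2 * (r - s))" .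
    qed
    also have "\<dots> = ennreal (2 * (r - s))"
      using nn_integral_cmult_indicator[of "{0..1::real}" lborel "ennreal (2*(r-s))"] by (simp add: mult.commute)
    finally show ?thesis .
  qed
  also have "(\<integral>\<^sup>+x. G1 x \<partial>lborel) \<le> ennreal (2 * (r - s))"
  proof -
    have "(\<integral>\<^sup>+x. G1 x \<partial>lborel) = (\<integral>\<^sup>+x. G1 x \<partial>(lborel \<Otimes>\<^sub>M lborel))"
      by (simp add: lborel_prod)
    also have "\<dots> = (\<integral>\<^sup>+x2. (\<integral>\<^sup>+x1. G1 (x1, x2) \<partial>lborel) \<partial>lborel)"
      by (rule lborel_pair.nn_integral_snd[symmetric]) (simp add: lborel_prod)
    also have "\<dots> \<le> (\<integral>\<^sup>+x2. indicator {0..1::real} x2 * ennreal (2 * (r - s)) \<partial>lborel)"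
    proof (rule nn_integral_mono)
      fix x2 :: real
      have "(\<integral>\<^sup>+x1. G1 (x1, x2) \<partial>lborel) \<le> (\<integral>\<^sup>+x1. indicator {0..1} x2 * (ennreal (\<bar>q1 - x1\<bar> / sqrt ((q2 - x2)\<^sup>2 + (q1 - x1)\<^sup>2)) * indicator {y. s < sqrt ((q2 - x2)\<^sup>2 + (q1 - y)\<^sup>2) \<and> sqrt ((q2 - x2)\<^sup>2 + (q1 - y)\<^sup>2) \<le> r} x1) \<partial>lborel)"
        by (intro nn_integral_mono) (auto simp: G1_def A_def Q dist_pair_sq S_mem indicator_def add.commute)
      also have "\<dots> = indicator {0..1} x2 * (\<integral>\<^sup>+x1. ennreal (\<bar>q1 - x1\<bar> / sqrt ((q2 - x2)\<^sup>2 + (q1 - x1)\<^sup>2)) * indicator {y. s < sqrt ((q2 - x2)\<^sup>2 + (q1 - y)\<^sup>2) \<and> sqrt ((q2 - x2)\<^sup>2 + (q1 - y)\<^sup>2) \<le> r} x1 \<partial>lborel)"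
        by (rule nn_integral_cmult) measurable
      also have "\<dots> \<le> indicator {0..1} x2 * ennreal (2 * (r - s))"
        by (intro mult_left_mono inner_shift[OF s]) auto
      finally show "(\<integral>\<^sup>+x1. G1 (x1, x2) \<partial>lborel) \<le> indicator {0..1} x2 * ennreal (2 * (r - s))" .
    qed
    also have "\<dots> = ennreal (2 * (r - s))"
      using nn_integral_cmult_indicator[of "{0..1::real}" lborel "ennreal (2*(r-s))"] by (simp add: mult.commute)
    finally show ?thesis .
  qed
  finally have "emeasure lborel A \<le> ennreal (2 * (r - s)) + ennreal (2 * (r - s))"
    by - (simp add: add_mono)
  also have "\<dots> = ennreal (4 * (r - s))" using s by (simp flip: ennreal_plus)
  finally show ?thesis unfolding A_def .
qed

lemma box_em: "emeasure lborel (cbox (a::real, b::real) (c, d)) = ennreal (max (c - a) 0 * max (d - b) 0)"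
  by (auto simp: emeasure_lborel_cbox_eq Basis_prod_def ennreal_mult mult.commute)

lemma S_sets_borel[measurable]: "unit_sq \<in> sets borel" unfolding unit_sq_def by simp

lemma sub_S_fin: "B \<subseteq> unit_sq \<Longrightarrow> B \<in> sets lborel \<Longrightarrow> emeasure lborel B = ennreal (measure lborel B)"
  by (rule emeasure_eq_ennreal_measure)
     (metis S_em S_sets emeasure_mono ennreal_one_neq_top neq_top_trans)

definition mm :: "real \<times> real \<Rightarrow> real \<Rightarrow> real" where
  "mm P r = measure lborel {x \<in> unit_sq. dist P x > r}"

lemma abs_sum_le: "\<bar>a\<bar> + \<bar>b\<bar> \<le> sqrt 2 * sqrt (a\<^sup>2 + b\<^sup>2)"
proof -
  have "(\<bar>a\<bar> + \<bar>b\<bar>)\<^sup>2 \<le> 2 * (a\<^sup>2 + b\<^sup>2)"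
  proof -
    have e1: "(\<bar>a\<bar> + \<bar>b\<bar>)\<^sup>2 = a\<^sup>2 + b\<^sup>2 + 2 * \<bar>a\<bar> * \<bar>b\<bar>" by (simp add: power2_sum)
    have e2: "(\<bar>a\<bar> - \<bar>b\<bar>)\<^sup>2 = a\<^sup>2 + b\<^sup>2 - 2 * \<bar>a\<bar> * \<bar>b\<bar>" by (simp add: power2_diff)
    have "0 \<le> (\<bar>a\<bar> - \<bar>b\<bar>)\<^sup>2" by simp
    moreover have e3: "2 * (a\<^sup>2 + b\<^sup>2) = 2 * a\<^sup>2 + 2 * b\<^sup>2" by simp
    ultimately show ?thesis using e1 e2 by linarith
  qed
  then have "\<bar>a\<bar> + \<bar>b\<bar> \<le> sqrt (2 * (a\<^sup>2 + b\<^sup>2))" by (simp add: real_le_rsqrt)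
  moreover have "sqrt (2 * (a\<^sup>2 + b\<^sup>2)) = sqrt 2 * sqrt (a\<^sup>2 + b\<^sup>2)" by (rule real_sqrt_mult)
  ultimately show ?thesis by linarith
qed

lemma shift1: "mm P r \<le> mm Q r + sqrt 2 * dist P Q"
proof -
  obtain p1 p2 where P: "P = (p1, p2)" by (cases P)
  obtain q1 q2 where Q: "Q = (q1, q2)" by (cases Q)
  define t1 where "t1 = q1 - p1"
  define t2 where "t2 = q2 - p2"
  define D where "D = {y. r < dist P y}"
  define T where "T = (\<lambda>y. y + (t1, t2)) -` unit_sq"
  define EQ where "EQ = {x \<in> unit_sq. r < dist Q x}"
  have D_sets[measurable]: "D \<in> sets borel" unfolding D_def by measurable
  have tm: "(\<lambda>y::real\<times>real. y + (t1, t2)) \<in> borel \<rightarrow>\<^sub>M borel"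
    by (intro borel_measurable_continuous_onI continuous_intros)
  have T_sets[measurable]: "T \<in> sets borel" unfolding T_def
    using measurable_sets[OF tm S_sets_borel] by simp
  have EQ_sets[measurable]: "EQ \<in> sets borel" unfolding EQ_def by measurable
  have "emeasure lborel (T \<inter> D) = emeasure (distr lborel borel ((+) (- (t1, t2)))) (T \<inter> D)"
    by (simp add: lborel_distr_plus)
  also have "\<dots> = emeasure lborel ((+) (- (t1, t2)) -` (T \<inter> D) \<inter> space lborel)"
    by (rule emeasure_distr) (auto intro: borel_measurable_continuous_onI continuous_intros)
  also have "(+) (- (t1, t2)) -` (T \<inter> D) \<inter> space lborel = EQ"
  proof -
    have "dist P (- (t1, t2) + x) = dist Q x" for x
      unfolding P Q t1_def t2_def by (cases x) (simp add: dist_pair_sq algebra_simps)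
    then show ?thesis unfolding T_def D_def EQ_def by auto
  qed
  finally have TD: "emeasure lborel (T \<inter> D) = emeasure lborel EQ" .
  define B1 where "B1 = cbox (0::real, 0::real) (- t1, 1)"
  define B2 where "B2 = cbox (1 - t1, 0::real) (1, 1)"
  define B3 where "B3 = cbox (0::real, 0::real) (1, - t2)"
  define B4 where "B4 = cbox (0::real, 1 - t2) (1, 1)"
  have sub: "unit_sq - T \<subseteq> B1 \<union> B2 \<union> B3 \<union> B4"
  proof
    fix x assume x: "x \<in> unit_sq - T"
    obtain x1 x2 where xx: "x = (x1, x2)" by (cases x)
    have h1: "0 \<le> x1" "x1 \<le> 1" "0 \<le> x2" "x2 \<le> 1" using x unfolding xx by (auto simp: S_mem)
    have h2: "\<not> (0 \<le> x1 + t1 \<and> x1 + t1 \<le> 1 \<and> 0 \<le> x2 + t2 \<and> x2 + t2 \<le> 1)"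
      using x unfolding xx T_def by (simp add: S_mem)
    have "(x1 \<le> - t1) \<or> (1 - t1 \<le> x1) \<or> (x2 \<le> - t2) \<or> (1 - t2 \<le> x2)" using h2 by linarith
    then show "x \<in> B1 \<union> B2 \<union> B3 \<union> B4"
      unfolding xx B1_def B2_def B3_def B4_def cbox_Pair_iff using h1 by (elim disjE) auto
  qed
  have "emeasure lborel (unit_sq - T) \<le> emeasure lborel (B1 \<union> B2 \<union> B3 \<union> B4)"
    by (intro emeasure_mono sub) (auto simp: B1_def B2_def B3_def B4_def)
  also have "\<dots> \<le> emeasure lborel B1 + emeasure lborel B2 + emeasure lborel B3 + emeasure lborel B4"
    by (intro order_trans[OF emeasure_subadditive] add_mono order_refl) (auto simp: B1_def B2_def B3_def B4_def)
  also have "\<dots> = ennreal (max (- t1) 0) + ennreal (max t1 0) + ennreal (max (- t2) 0) + ennreal (max t2 0)"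
    unfolding B1_def B2_def B3_def B4_def box_em by simp
  also have "\<dots> = ennreal (max (- t1) 0 + max t1 0 + max (- t2) 0 + max t2 0)"
    by (simp add: ennreal_plus)
  also have "max (- t1) 0 + max t1 0 + max (- t2) 0 + max t2 0 = \<bar>t1\<bar> + \<bar>t2\<bar>" by linarith
  finally have ST: "emeasure lborel (unit_sq - T) \<le> ennreal (\<bar>t1\<bar> + \<bar>t2\<bar>)" .
  have "unit_sq \<inter> D \<subseteq> (T \<inter> D) \<union> (unit_sq - T)" by auto
  then have "emeasure lborel (unit_sq \<inter> D) \<le> emeasure lborel ((T \<inter> D) \<union> (unit_sq - T))"
    by (intro emeasure_mono) auto
  also have "\<dots> \<le> emeasure lborel (T \<inter> D) + emeasure lborel (unit_sq - T)"
    by (intro emeasure_subadditive) auto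
  also have "\<dots> \<le> emeasure lborel EQ + ennreal (\<bar>t1\<bar> + \<bar>t2\<bar>)"
    using TD ST by (intro add_mono) auto
  finally have main: "emeasure lborel (unit_sq \<inter> D) \<le> emeasure lborel EQ + ennreal (\<bar>t1\<bar> + \<bar>t2\<bar>)" .
  have e1: "emeasure lborel (unit_sq \<inter> D) = ennreal (mm P r)"
  proof -
    have "unit_sq \<inter> D = {x \<in> unit_sq. dist P x > r}" unfolding D_def by auto
    then show ?thesis unfolding mm_def by (subst sub_S_fin) auto
  qed
  have e2: "emeasure lborel EQ = ennreal (mm Q r)"
    unfolding mm_def EQ_def by (subst sub_S_fin) auto
  have pl: "ennreal (mm Q r + (\<bar>t1\<bar> + \<bar>t2\<bar>)) = ennreal (mm Q r) + ennreal (\<bar>t1\<bar> + \<bar>t2\<bar>)"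
    by (rule ennreal_plus) (auto simp: mm_def)
  have le1: "ennreal (mm P r) \<le> ennreal (mm Q r + (\<bar>t1\<bar> + \<bar>t2\<bar>))"
    using main unfolding e1 e2 pl .
  have "mm P r \<le> mm Q r + (\<bar>t1\<bar> + \<bar>t2\<bar>)"
    using ennreal_le_iff[THEN iffD1, OF _ le1] by (simp add: mm_def)
  also have "\<bar>t1\<bar> + \<bar>t2\<bar> \<le> sqrt 2 * dist P Q"
    using abs_sum_le[of t1 t2] unfolding P Q t1_def t2_def dist_pair_sq
    by (simp add: power2_commute)
  finally show ?thesis by simp
qed

lemma radius1:
  assumes s: "0 \<le> s" "s \<le> r"
  shows "mm Q s - mm Q r \<le> 4 * (r - s)"
proof -
  have sub: "{x \<in> unit_sq. dist Q x > r} \<subseteq> {x \<in> unit_sq. dist Q x > s}" using s by auto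
  have eq: "{x \<in> unit_sq. dist Q x > s} - {x \<in> unit_sq. dist Q x > r} = unit_sq \<inter> {x. s < dist Q x \<and> dist Q x \<le> r}"
    by auto
  have "mm Q s - mm Q r = measure lborel (unit_sq \<inter> {x. s < dist Q x \<and> dist Q x \<le> r})"
    unfolding mm_def eq[symmetric]
    by (rule measure_Diff[symmetric, OF _ _ _ sub]) (auto simp: sub_S_fin)
  also have "\<dots> \<le> 4 * (r - s)"
  proof -
    have "ennreal (measure lborel (unit_sq \<inter> {x. s < dist Q x \<and> dist Q x \<le> r})) \<le> ennreal (4 * (r - s))"
      using annulus_bound[OF s, of Q] by (subst (asm) sub_S_fin) auto
    then show ?thesis using s by (simp add: ennreal_le_iff)
  qed
  finally show ?thesis .
qed

lemma radius_mono:
  assumes "s \<le> r" shows "mm Q r \<le> mm Q s"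
  unfolding mm_def using assms
  by (intro measure_mono_fmeasurable) (auto simp: fmeasurable_def sub_S_fin)

lemma radius_abs:
  assumes "0 \<le> a" "0 \<le> b" shows "\<bar>mm Q a - mm Q b\<bar> \<le> 4 * \<bar>a - b\<bar>"
proof (cases "a \<le> b")
  case True
  then show ?thesis using radius1[of a b Q] radius_mono[of a b Q] assms by auto
next
  case False
  then show ?thesis using radius1[of b a Q] radius_mono[of b a Q] assms by auto
qed

lemma g1_alt: "g1 P = (\<integral>x. indicator unit_sq x * dist P x \<partial>lborel)"
proof -
  have "uniform_measure lborel unit_sq = density lborel (\<lambda>x. ennreal (indicator unit_sq x))"
    by (simp add: uniform_measure_def S_em divide_ennreal_def ennreal_indicator)
  then show ?thesis unfolding g1_def
    by (simp add: integral_density)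
qed

lemma g1_int: "integrable lborel (\<lambda>x. indicator unit_sq x * dist P x)"
  using borel_integrable_compact[of unit_sq "dist P"] unfolding unit_sq_def
  by (simp add: continuous_intros)

lemma g1_nonneg: "0 \<le> g1 P"
  unfolding g1_alt by (intro integral_nonneg_AE) auto

lemma g1_lip: "g1 P \<le> g1 Q + dist P Q"
proof -
  have i1: "integrable lborel (indicator unit_sq :: real \<times> real \<Rightarrow> real)"
    by (rule integrable_real_indicator) (auto simp: S_em)
  have "g1 P \<le> (\<integral>x. indicator unit_sq x * dist Q x + dist P Q * indicator unit_sq x \<partial>lborel)"
    unfolding g1_alt
  proof (rule integral_mono)
    show "integrable lborel (\<lambda>x. indicator unit_sq x * dist P x)" by (rule g1_int)
    show "integrable lborel (\<lambda>x. indicator unit_sq x * dist Q x + dist P Q * indicator unit_sq x)"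
      by (rule Bochner_Integration.integrable_add[OF g1_int]) (rule integrable_mult_right, rule i1)
    fix x show "indicator unit_sq x * dist P x \<le> indicator unit_sq x * dist Q x + dist P Q * indicator unit_sq x"
      using dist_triangle[of P x Q] by (auto simp: indicator_def)
  qed
  also have "\<dots> = g1 Q + dist P Q"
    unfolding g1_alt
    using i1 by (subst Bochner_Integration.integral_add) (auto intro!: g1_int simp: S_em measure_def)
  finally show ?thesis .
qed

theorem lemma21:
  fixes P Q :: "real \<times> real"
  shows "\<bar>g3 P - g3 Q\<bar> \<le> (3 + sqrt 2) * dist P Q"
proof -
  define a where "a = 3/4 * g1 P"
  define b where "b = 3/4 * g1 Q"
  have a0: "0 \<le> a" and b0: "0 \<le> b" unfolding a_def b_def using g1_nonneg by auto
  have gg: "\<bar>g1 P - g1 Q\<bar> \<le> dist P Q"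
    using g1_lip[of P Q] g1_lip[of Q P] by (auto simp: dist_commute abs_le_iff)
  have "- dist P Q \<le> g1 P - g1 Q" "g1 P - g1 Q \<le> dist P Q" using gg by auto
  then have ab: "\<bar>a - b\<bar> \<le> 3/4 * dist P Q"
    unfolding abs_le_iff a_def b_def by (intro conjI) linarith+
  have g3P: "g3 P = mm P a" unfolding g3_def mm_def a_def by simp
  have g3Q: "g3 Q = mm Q b" unfolding g3_def mm_def b_def by simp
  have sh: "\<bar>mm P a - mm Q a\<bar> \<le> sqrt 2 * dist P Q"
    using shift1[of P a Q] shift1[of Q a P] by (auto simp: dist_commute)
  have "\<bar>mm P a - mm Q b\<bar> \<le> \<bar>mm P a - mm Q a\<bar> + \<bar>mm Q a - mm Q b\<bar>" by linarith
  also have "\<dots> \<le> sqrt 2 * dist P Q + 4 * (3/4 * dist P Q)"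
  proof -
    have "4 * \<bar>a - b\<bar> \<le> 4 * (3/4 * dist P Q)" using ab by simp
    then show ?thesis using sh radius_abs[OF a0 b0, of Q] by linarith
  qed
  finally show ?thesis unfolding g3P g3Q by (simp add: algebra_simps)
qed
end
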